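(* For every $k\ge 0$, a permutation $\pi$ is sorted by the left-greedy procedure on the $\mathfrak{D}^k\mathfrak{I}$ machine if and only if $\pi$ avoids the pattern $231$. In particular, $Sort^{(lg)}_k$ is a permutation class with basis $\{231\}$.
   Context: The $\mathfrak{D}^k\mathfrak{I}$ machine consists of $k$ stacks $D_1,\dots,D_k$ (decreasing stacks) followed in series by a stack $I$ (increasing stack). The input permutation is read from left to right. The elements of each $D_i$ must be in decreasing order from top to bottom (top is largest), and those of $I$ in increasing order from top to bottom (top is smallest). Operations: $d_0$ pushes the next input element into $D_1$ (into $I$ if $k=0$); $d_i$ ($1\le i\le k-1$) moves the top of $D_i$ to $D_{i+1}$; $d_k$ moves the top of $D_k$ to $I$; $d_{k+1}$ pops the top of $I$ and appends it to the output. An operation is legal if it respects the stack restrictions; $d_{k+1}$ is legal if the popped element is the smallest among the elements not yet output, and also if no other operation is legal. The left-greedy procedure performs, at each step, the legal operation $d_j$ with the largest index $j$ (priority $d_{k+1}\rhd d_k\rhd\cdots\rhd d_1\rhd d_0$). $Sort^{(lg)}_k$ is the set of permutations whose output under this procedure is the identity. *)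

theory Defs
  imports Main
begin

text \<open>Configuration of the D^k I machine: remaining input (head = next element),
  the decreasing stacks D_1..D_k (ds ! (i-1) = D_i, head = top), the increasing
  stack I (head = top), and the output produced so far (in order).\<close>

record cfg =
  inp  :: "nat list"
  ds   :: "nat list list"
  istk :: "nat list"
  outp :: "nat list"

definition init_cfg :: "nat \<Rightarrow> nat list \<Rightarrow> cfg" where
  "init_cfg k \<pi> = \<lparr>inp = \<pi>, ds = replicate k [], istk = [], outp = []\<rparr>"

text \<open>Legality of the operation d_j for 0 <= j <= k (not the pop d_(k+1)).\<close>
definition legal_move :: "nat \<Rightarrow> cfg \<Rightarrow> nat \<Rightarrow> bool" where
  "legal_move k c j =
    (if j = 0 then
       inp c \<noteq> [] \<and>
       (if k = 0 then istk c = [] \<or> hd (inp c) < hd (istk c)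
        else ds c ! 0 = [] \<or> hd (ds c ! 0) < hd (inp c))
     else if j < k then
       ds c ! (j - 1) \<noteq> [] \<and> (ds c ! j = [] \<or> hd (ds c ! j) < hd (ds c ! (j - 1)))
     else if j = k then
       ds c ! (k - 1) \<noteq> [] \<and> (istk c = [] \<or> hd (ds c ! (k - 1)) < hd (istk c))
     else False)"

definition do_move :: "nat \<Rightarrow> cfg \<Rightarrow> nat \<Rightarrow> cfg" where
  "do_move k c j =
    (if j = 0 then
       (if k = 0 then c\<lparr>inp := tl (inp c), istk := hd (inp c) # istk c\<rparr>
        else c\<lparr>inp := tl (inp c), ds := (ds c)[0 := hd (inp c) # ds c ! 0]\<rparr>)
     else if j < k then
       c\<lparr>ds := ((ds c)[j - 1 := tl (ds c ! (j - 1))])[j := hd (ds c ! (j - 1)) # ds c ! j]\<rparr>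
     else
       c\<lparr>ds := (ds c)[k - 1 := tl (ds c ! (k - 1))], istk := hd (ds c ! (k - 1)) # istk c\<rparr>)"

definition do_pop :: "cfg \<Rightarrow> cfg" where
  "do_pop c = c\<lparr>istk := tl (istk c), outp := outp c @ [hd (istk c)]\<rparr>"

definition pending :: "cfg \<Rightarrow> nat set" where
  "pending c = set (inp c) \<union> (\<Union>s\<in>set (ds c). set s) \<union> set (istk c)"

text \<open>Priority d_(k+1) > d_k > ... > d_0; d_(k+1) is legal if the top of I is the
  smallest pending element, or (I nonempty and) no other operation is legal.\<close>
definition lg_step :: "nat \<Rightarrow> cfg \<Rightarrow> cfg option" where
  "lg_step k c =
    (if istk c \<noteq> [] \<and> hd (istk c) = Min (pending c) then Some (do_pop c)
     else if \<exists>j\<le>k. legal_move k c j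
       then Some (do_move k c (GREATEST j. j \<le> k \<and> legal_move k c j))
     else if istk c \<noteq> [] then Some (do_pop c)
     else None)"

fun lg_run :: "nat \<Rightarrow> nat \<Rightarrow> cfg \<Rightarrow> cfg" where
  "lg_run k 0 c = c"
| "lg_run k (Suc f) c = (case lg_step k c of None \<Rightarrow> c | Some c' \<Rightarrow> lg_run k f c')"

definition lg_sortable :: "nat \<Rightarrow> nat list \<Rightarrow> bool" where
  "lg_sortable k \<pi> =
    (\<exists>f. lg_step k (lg_run k f (init_cfg k \<pi>)) = None \<and>
         outp (lg_run k f (init_cfg k \<pi>)) = [1..<length \<pi> + 1])"

definition is_perm :: "nat list \<Rightarrow> bool" where
  "is_perm \<pi> = (distinct \<pi> \<and> set \<pi> = {1..length \<pi>})"

definition avoids_231 :: "nat list \<Rightarrow> bool" where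
  "avoids_231 \<pi> = (\<not> (\<exists>i j l. i < j \<and> j < l \<and> l < length \<pi> \<and>
                          \<pi> ! l < \<pi> ! i \<and> \<pi> ! i < \<pi> ! j))"

end

theory Submission
  imports Defs
begin

definition cfgN :: "nat \<Rightarrow> nat list \<Rightarrow> nat list \<Rightarrow> nat list \<Rightarrow> cfg" where
  "cfgN k xs zs os = \<lparr>inp = xs, ds = replicate k [], istk = zs, outp = os\<rparr>"
definition cfgT :: "nat \<Rightarrow> nat \<Rightarrow> nat \<Rightarrow> nat list \<Rightarrow> nat list \<Rightarrow> nat list \<Rightarrow> cfg" where
  "cfgT k i x xs zs os = \<lparr>inp = xs, ds = (replicate k [])[i := [x]], istk = zs, outp = os\<rparr>"

lemma greatest_eq:
  assumes "legal_move k c j" "j \<le> k" "\<And>j'. j < j' \<Longrightarrow> j' \<le> k \<Longrightarrow> \<not> legal_move k c j'"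
  shows "(GREATEST j. j \<le> k \<and> legal_move k c j) = j"
  by (rule Greatest_equality) (use assms in \<open>auto simp: not_le[symmetric]\<close>)

lemma rep_upd[simp]: "(replicate k y)[i := y] = replicate k y"
proof (cases "i < k")
  case True then show ?thesis by (simp add: list_eq_iff_nth_eq nth_list_update)
qed (simp add: list_update_beyond)

lemma nthT: "i < k \<Longrightarrow> j < k \<Longrightarrow> (replicate k [])[i := [x]] ! j = (if j = i then [x] else [])"
  by (simp add: nth_list_update)

lemma legalN: "0 < j \<Longrightarrow> \<not> legal_move k (cfgN k xs zs os) j"
  by (auto simp: legal_move_def cfgN_def)

lemma legalT: "i < k \<Longrightarrow> 0 < j \<Longrightarrow> legal_move k (cfgT k i x xs zs os) j \<longleftrightarrow>
   (j = i + 1 \<and> (j < k \<or> (j = k \<and> (zs = [] \<or> x < hd zs))))"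
  by (auto simp: legal_move_def cfgT_def nthT)

lemma pendingN: "pending (cfgN k xs zs os) = set xs \<union> set zs"
  by (auto simp: pending_def cfgN_def)

lemma setT: "i < k \<Longrightarrow> (\<Union>s\<in>set ((replicate k [])[i := [x]]). set s) = {x}"
proof -
  assume a: "i < k"
  have "[x] \<in> set ((replicate k [])[i := [x]])" using a by (simp add: set_update_memI)
  moreover have "set ((replicate k [])[i := [x]]) \<subseteq> {[x], []}"
    using set_update_subset_insert[of "replicate k []" i "[x]"] by auto
  ultimately show ?thesis by auto
qed

lemma pendingT: "i < k \<Longrightarrow> pending (cfgT k i x xs zs os) = insert x (set xs \<union> set zs)"
  using setT[of i k x] by (auto simp: pending_def cfgT_def)

lemma popN: "do_pop (cfgN k xs zs os) = cfgN k xs (tl zs) (os @ [hd zs])"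
  by (simp add: do_pop_def cfgN_def)
lemma popT: "do_pop (cfgT k i x xs zs os) = cfgT k i x xs (tl zs) (os @ [hd zs])"
  by (simp add: do_pop_def cfgT_def)

definition popc :: "cfg \<Rightarrow> bool" where
  "popc c = (istk c \<noteq> [] \<and> hd (istk c) = Min (pending c))"

lemma step_pop: "popc c \<Longrightarrow> lg_step k c = Some (do_pop c)"
  by (simp add: lg_step_def popc_def)

lemma step_N_push: "0 < k \<Longrightarrow> \<not> popc (cfgN k (x#ys) zs os) \<Longrightarrow>
   lg_step k (cfgN k (x#ys) zs os) = Some (cfgT k 0 x ys zs os)"
proof -
  assume k: "0 < k" and np: "\<not> popc (cfgN k (x#ys) zs os)"
  have l0: "legal_move k (cfgN k (x#ys) zs os) 0" using k by (simp add: legal_move_def cfgN_def)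
  have g: "(GREATEST j. j \<le> k \<and> legal_move k (cfgN k (x#ys) zs os) j) = 0"
    by (rule greatest_eq[OF l0]) (auto simp: legalN)
  show ?thesis using np l0 k unfolding lg_step_def popc_def g
    by (auto simp: do_move_def cfgN_def cfgT_def)
qed

lemma step_N0_push: "\<not> popc (cfgN 0 (x#ys) zs os) \<Longrightarrow> (zs = [] \<or> x < hd zs) \<Longrightarrow>
   lg_step 0 (cfgN 0 (x#ys) zs os) = Some (cfgN 0 ys (x#zs) os)"
proof -
  assume np: "\<not> popc (cfgN 0 (x#ys) zs os)" and h: "zs = [] \<or> x < hd zs"
  have l0: "legal_move 0 (cfgN 0 (x#ys) zs os) 0" using h by (auto simp add: legal_move_def cfgN_def)
  have g: "(GREATEST j. j \<le> 0 \<and> legal_move 0 (cfgN 0 (x#ys) zs os) j) = 0"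
    by (rule greatest_eq[OF l0]) (auto simp: legalN)
  show ?thesis using np l0 unfolding lg_step_def popc_def g
    by (auto simp: do_move_def cfgN_def)
qed

lemma step_N_empty: "lg_step k (cfgN k [] [] os) = None"
  by (auto simp: lg_step_def cfgN_def legal_move_def)

lemma step_T_move: "i + 1 < k \<Longrightarrow> \<not> popc (cfgT k i x ys zs os) \<Longrightarrow>
   lg_step k (cfgT k i x ys zs os) = Some (cfgT k (i+1) x ys zs os)"
proof -
  assume k: "i + 1 < k" and np: "\<not> popc (cfgT k i x ys zs os)"
  have l0: "legal_move k (cfgT k i x ys zs os) (i+1)" using k by (simp add: legalT)
  have g: "(GREATEST j. j \<le> k \<and> legal_move k (cfgT k i x ys zs os) j) = i+1"
    by (rule greatest_eq[OF l0]) (use k in \<open>auto simp: legalT\<close>)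
  have e: "((replicate k [])[i := [x], i := tl ((replicate k [])[i := [x]] ! i)])
      [Suc i := x # (replicate k [])[i := [x]] ! Suc i] = (replicate k [])[Suc i := [x]]"
    using k by (simp add: nth_list_update list_update_overwrite)
  have ex: "\<exists>j\<le>k. legal_move k (cfgT k i x ys zs os) j" using l0 k by (intro exI[of _ "i+1"]) auto
  show ?thesis using np ex k e unfolding lg_step_def popc_def g
    by (auto simp: do_move_def cfgT_def)
qed

lemma step_T_cross: "0 < k \<Longrightarrow> \<not> popc (cfgT k (k-1) x ys zs os) \<Longrightarrow> (zs = [] \<or> x < hd zs) \<Longrightarrow>
   lg_step k (cfgT k (k-1) x ys zs os) = Some (cfgN k ys (x#zs) os)"
proof -
  assume k: "0 < k" and np: "\<not> popc (cfgT k (k-1) x ys zs os)" and h: "zs = [] \<or> x < hd zs"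
  have l0: "legal_move k (cfgT k (k-1) x ys zs os) k" using k h by (subst legalT) auto
  have g: "(GREATEST j. j \<le> k \<and> legal_move k (cfgT k (k-1) x ys zs os) j) = k"
    by (rule greatest_eq[OF l0]) auto
  have e: "(replicate k [])[k - 1 := [x], k - 1 := tl ((replicate k [])[k - 1 := [x]] ! (k - 1))] = replicate k []"
    using k by (simp add: nth_list_update list_update_overwrite)
  show ?thesis using np l0 k e unfolding lg_step_def popc_def g
    by (auto simp: do_move_def cfgT_def cfgN_def)
qed


lemma step_cases:
  assumes "lg_step k c = Some c'"
  shows "(istk c \<noteq> [] \<and> c' = do_pop c) \<or> (\<exists>j\<le>k. legal_move k c j \<and> c' = do_move k c j)"
proof -
  let ?P = "\<lambda>j. j \<le> k \<and> legal_move k c j"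
  have G: "\<exists>j. ?P j \<Longrightarrow> ?P (Greatest ?P)"
    using GreatestI_ex_nat[of ?P k] by blast
  show ?thesis using assms G unfolding lg_step_def
    by (auto split: if_splits)
qed

lemma run_Some: "lg_step k c = Some c' \<Longrightarrow> lg_run k (Suc f) c = lg_run k f c'"
  by simp

definition WF :: "nat \<Rightarrow> cfg \<Rightarrow> bool" where
  "WF k c = (length (ds c) = k \<and> sorted_wrt (<) (istk c) \<and> (\<forall>s\<in>set (ds c). sorted_wrt (>) s))"

lemma sw_gt_hd: "sorted_wrt (>) s \<Longrightarrow> (y::nat) \<in> set s \<Longrightarrow> y \<le> hd s"
  by (cases s) auto
lemma sw_lt_hd: "sorted_wrt (<) s \<Longrightarrow> (y::nat) \<in> set s \<Longrightarrow> hd s \<le> y"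
  by (cases s) auto
lemma push_gt: "sorted_wrt (>) s \<Longrightarrow> (s = [] \<or> hd s < (h::nat)) \<Longrightarrow> sorted_wrt (>) (h # s)"
  by (cases s) auto
lemma push_lt: "sorted_wrt (<) s \<Longrightarrow> (s = [] \<or> (h::nat) < hd s) \<Longrightarrow> sorted_wrt (<) (h # s)"
  by (cases s) auto
lemma sw_tl: "sorted_wrt P s \<Longrightarrow> sorted_wrt P (tl s)"
  by (cases s) auto

lemma all_upd: "\<forall>s\<in>set xs. P s \<Longrightarrow> P v \<Longrightarrow> \<forall>s\<in>set (xs[i := v]). P s"
  using set_update_subset_insert[of xs i v] by auto

lemma wf_pop: "WF k c \<Longrightarrow> WF k (do_pop c)"
  by (auto simp: WF_def do_pop_def intro: sw_tl)

lemma wf_move: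
  assumes w: "WF k c" and j: "j \<le> k" and l: "legal_move k c j"
  shows "WF k (do_move k c j)"
proof -
  have L: "length (ds c) = k" and S: "sorted_wrt (<) (istk c)" and D: "\<forall>s\<in>set (ds c). sorted_wrt (>) s"
    using w by (auto simp: WF_def)
  have Di: "\<And>i. i < k \<Longrightarrow> sorted_wrt (>) (ds c ! i)" using D L by auto
  consider "j = 0" "k = 0" | "j = 0" "k > 0" | "0 < j" "j < k" | "0 < j" "j = k" using j by linarith
  then show ?thesis
  proof cases
    case 1
    have b: "sorted_wrt (<) (hd (inp c) # istk c)" using l 1 S by (intro push_lt) (auto simp: legal_move_def)
    then show ?thesis using 1 L S D by (auto simp: WF_def do_move_def)
  next
    case 2
    have "sorted_wrt (>) (hd (inp c) # ds c ! 0)" using l 2 Di[of 0] by (intro push_gt) (auto simp: legal_move_def)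
    note u = all_upd[OF D this, of 0]
    show ?thesis using 2 L S u by (simp add: WF_def do_move_def)
  next
    case 3
    have a: "sorted_wrt (>) (tl (ds c ! (j-1)))" using 3 Di[of "j-1"] by (auto intro: sw_tl)
    have b: "sorted_wrt (>) (hd (ds c ! (j-1)) # ds c ! j)" using l 3 Di[of j] by (intro push_gt) (auto simp: legal_move_def)
    note u = all_upd[OF all_upd[OF D a, of "j-1"] b, of j]
    show ?thesis using 3 L S u by (simp add: WF_def do_move_def)
  next
    case 4
    have a: "sorted_wrt (>) (tl (ds c ! (k-1)))" using 4 Di[of "k-1"] by (auto intro: sw_tl)
    have b: "sorted_wrt (<) (hd (ds c ! (k-1)) # istk c)" using l 4 S by (intro push_lt) (auto simp: legal_move_def)
    note u = all_upd[OF D a, of "k-1"]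
    show ?thesis using 4 L b u by (simp add: WF_def do_move_def)
  qed
qed

lemma wf_step: "WF k c \<Longrightarrow> lg_step k c = Some c' \<Longrightarrow> WF k c'"
  using step_cases[of k c c'] wf_pop wf_move by blast


definition B2 :: "nat \<Rightarrow> nat \<Rightarrow> nat \<Rightarrow> nat \<Rightarrow> cfg \<Rightarrow> bool" where
  "B2 k a b cc c = (a \<in> set (istk c) \<and> cc \<notin> set (istk c) \<and> cc \<notin> set (outp c) \<and>
    (if k = 0 then inp c \<noteq> [] \<and> hd (inp c) = b else b \<in> set (ds c ! (k-1)) \<and> cc \<notin> set (ds c ! (k-1))))"

definition Bad :: "nat \<Rightarrow> nat \<Rightarrow> nat \<Rightarrow> nat \<Rightarrow> cfg \<Rightarrow> bool" where
  "Bad k a b cc c = (cc < a \<and> a < b \<and> (\<not> sorted (outp c) \<or> (a \<in> set (outp c) \<and> cc \<notin> set (outp c)) \<or>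
     B2 k a b cc c))"

lemma in_tl: "a \<in> set xs \<Longrightarrow> a \<noteq> hd xs \<Longrightarrow> a \<in> set (tl xs)"
  by (cases xs) auto
lemma notin_tl: "a \<notin> set xs \<Longrightarrow> a \<notin> set (tl xs)"
  by (cases xs) auto

lemma bad_pop:
  assumes bad: "Bad k a b cc c" and ne: "istk c \<noteq> []"
  shows "Bad k a b cc (do_pop c)"
proof -
  let ?h = "hd (istk c)"
  have o: "outp (do_pop c) = outp c @ [?h]" "istk (do_pop c) = tl (istk c)"
    "inp (do_pop c) = inp c" "ds (do_pop c) = ds c" by (simp_all add: do_pop_def)
  have ca: "cc < a" "a < b" using bad by (auto simp: Bad_def)
  consider "\<not> sorted (outp c)" | "a \<in> set (outp c)" "cc \<notin> set (outp c)" | "B2 k a b cc c"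
    using bad by (auto simp: Bad_def)
  then show ?thesis
  proof cases
    case 1 then show ?thesis using ca o by (auto simp: Bad_def sorted_append)
  next
    case 2
    show ?thesis
    proof (cases "?h = cc")
      case True
      have "\<not> sorted (outp c @ [cc])"
      proof
        assume "sorted (outp c @ [cc])"
        then have "a \<le> cc" using 2 by (auto simp: sorted_append)
        then show False using ca by simp
      qed
      then show ?thesis using True o ca by (simp add: Bad_def)
    next
      case False
      then show ?thesis using 2 ca o by (auto simp: Bad_def)
    qed
  next
    case 3
    have h1: "?h \<in> set (istk c)" using ne by simp
    show ?thesis
    proof (cases "?h = a")
      case True then show ?thesis using 3 ca o by (auto simp: Bad_def B2_def)
    next
      case False
      have "a \<in> set (tl (istk c))" using 3 False by (intro in_tl) (auto simp: B2_def)
      moreover have "?h \<noteq> cc" using 3 h1 by (auto simp: B2_def)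
      ultimately show ?thesis using 3 ca o by (auto simp: Bad_def B2_def notin_tl)
    qed
  qed
qed

lemma bad_move:
  assumes w: "WF k c" and bad: "Bad k a b cc c" and j: "j \<le> k" and l: "legal_move k c j"
  shows "Bad k a b cc (do_move k c j)"
proof -
  have L: "length (ds c) = k" and S: "sorted_wrt (<) (istk c)" and D: "\<forall>s\<in>set (ds c). sorted_wrt (>) s"
    using w by (auto simp: WF_def)
  have Di: "\<And>i. i < k \<Longrightarrow> sorted_wrt (>) (ds c ! i)" using D L by auto
  have ca: "cc < a" "a < b" using bad by (auto simp: Bad_def)
  have o: "outp (do_move k c j) = outp c" by (simp add: do_move_def)
  show ?thesis
  proof (cases "B2 k a b cc c")
    case False then show ?thesis using bad o by (simp add: Bad_def)
  next
    case True
    have ai: "a \<in> set (istk c)" using True by (simp add: B2_def)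
    have hi: "hd (istk c) \<le> a" using sw_lt_hd[OF S ai] .
    show ?thesis
    proof (cases "k = 0")
      case k0: True
      then have "j = 0" using j by simp
      then show ?thesis using l True k0 hi ca ai by (auto simp: legal_move_def B2_def)
    next
      case kp: False
      have bk: "b \<in> set (ds c ! (k-1))" "cc \<notin> set (ds c ! (k-1))" using True kp by (auto simp: B2_def)
      have bh: "b \<le> hd (ds c ! (k-1))" using sw_gt_hd[OF Di bk(1)] kp by simp
      have nek: "ds c ! (k-1) \<noteq> []" using bk by auto
      have jk: "j < k"
      proof (rule ccontr)
        assume "\<not> j < k" then have "j = k" using j by simp
        then have "hd (ds c ! (k-1)) < hd (istk c)" using l kp ai by (auto simp: legal_move_def)
        then show False using bh hi ca by simp
      qed
      have ist: "istk (do_move k c j) = istk c" using jk by (simp add: do_move_def)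
      have dsk: "b \<in> set (ds (do_move k c j) ! (k-1)) \<and> cc \<notin> set (ds (do_move k c j) ! (k-1))"
      proof (cases "j = 0")
        case j0: True
        show ?thesis
        proof (cases "k = 1")
          case True
          have "hd (ds c ! 0) < hd (inp c)" using l j0 True nek by (auto simp: legal_move_def)
          then show ?thesis using True j0 bk bh ca L by (auto simp: do_move_def nth_list_update)
        next
          case False
          then show ?thesis using j0 bk kp L by (auto simp: do_move_def nth_list_update)
        qed
      next
        case jp: False
        show ?thesis
        proof (cases "j = k - 1")
          case True
          have "hd (ds c ! j) < hd (ds c ! (j-1))" using l jp jk True nek by (auto simp: legal_move_def)
          then show ?thesis using True jp jk bk bh ca L by (auto simp: do_move_def nth_list_update)
        next
          case False
          then show ?thesis using jp jk bk kp L by (auto simp: do_move_def nth_list_update)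
        qed
      qed
      have "B2 k a b cc (do_move k c j)" using True ist o dsk kp by (simp add: B2_def)
      then show ?thesis using ca by (simp add: Bad_def)
    qed
  qed
qed

lemma bad_step: "WF k c \<Longrightarrow> Bad k a b cc c \<Longrightarrow> lg_step k c = Some c' \<Longrightarrow> Bad k a b cc c'"
  using step_cases[of k c c'] bad_pop bad_move by blast

lemma bad_run: "WF k c \<Longrightarrow> Bad k a b cc c \<Longrightarrow> Bad k a b cc (lg_run k f c)"
proof (induction f arbitrary: c)
  case 0 then show ?case by simp
next
  case (Suc f)
  show ?case
  proof (cases "lg_step k c")
    case None then show ?thesis using Suc by simp
  next
    case (Some c')
    then show ?thesis using Suc.IH[of c'] Suc.prems wf_step bad_step by simp
  qed
qed

lemma bad_final: "Bad k a b cc c \<Longrightarrow> cc \<in> {1..n} \<Longrightarrow> outp c \<noteq> [1..<n+1]"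
proof
  assume b: "Bad k a b cc c" "cc \<in> {1..n}" and e: "outp c = [1..<n+1]"
  have "sorted (outp c)" "cc \<in> set (outp c)" using e b(2) by (simp_all del: upt_Suc)
  then show False using b(1) by (auto simp: Bad_def B2_def)
qed


declare upt_Suc[simp del]

definition Qc :: "nat list \<Rightarrow> cfg \<Rightarrow> bool" where
  "Qc \<pi> c = (\<forall>i j l. i < j \<and> j < l \<and> l < length \<pi> \<and> \<pi> ! l < \<pi> ! i \<and> \<pi> ! i < \<pi> ! j \<longrightarrow>
      \<pi> ! j \<notin> set (istk c) \<and> \<pi> ! j \<notin> set (outp c))"

definition IP :: "nat list \<Rightarrow> nat list \<Rightarrow> nat list \<Rightarrow> nat list \<Rightarrow> nat list \<Rightarrow> bool" where
  "IP \<pi> pre xs zs os = (\<pi> = pre @ xs \<and> distinct (xs @ zs @ os) \<and> set (xs @ zs @ os) = {1..length \<pi>}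
     \<and> os = [1..<length os + 1] \<and> sorted_wrt (<) zs)"

lemma set_os: "os = [1..<length os + 1] \<Longrightarrow> set os = {1..length os}"
  by (metis atLeastLessThanSuc_atLeastAtMost set_upt Suc_eq_plus1)

lemma ip_pend: "IP \<pi> pre xs zs os \<Longrightarrow> set xs \<union> set zs = {length os + 1..length \<pi>}"
proof -
  assume h: "IP \<pi> pre xs zs os"
  have so: "set os = {1..length os}" using h set_os by (auto simp: IP_def)
  have d: "set os \<inter> (set xs \<union> set zs) = {}" using h by (auto simp: IP_def)
  have u: "set xs \<union> set zs \<union> set os = {1..length \<pi>}" using h by (auto simp: IP_def)
  show ?thesis
  proof (intro set_eqI iffI)
    fix y assume y: "y \<in> set xs \<union> set zs"
    have "y \<in> {1..length \<pi>}" using u y by blast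
    moreover have "y \<notin> {1..length os}" using d y so by blast
    ultimately show "y \<in> {length os + 1..length \<pi>}" by auto
  next
    fix y assume "y \<in> {length os + 1..length \<pi>}"
    then show "y \<in> set xs \<union> set zs" using u so by auto
  qed
qed

lemma ip_pre: "IP \<pi> pre xs zs os \<Longrightarrow> is_perm \<pi> \<Longrightarrow> set pre \<subseteq> set zs \<union> set os"
proof -
  assume h: "IP \<pi> pre xs zs os" and p: "is_perm \<pi>"
  have "distinct (pre @ xs)" using h p by (auto simp: IP_def is_perm_def)
  then have "set pre \<inter> set xs = {}" by auto
  moreover have "set pre \<subseteq> {1..length \<pi>}" using h p by (auto simp: IP_def is_perm_def)
  moreover have u: "set xs \<union> set zs \<union> set os = {1..length \<pi>}" using h by (auto simp: IP_def)
  ultimately show ?thesis by blast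
qed

lemma hd_min: "sorted_wrt (<) zs \<Longrightarrow> zs \<noteq> [] \<Longrightarrow> hd zs = Min (set (zs::nat list))"
  by (cases zs) (auto intro!: Min_eqI[symmetric])

lemma pop_ip:
  assumes h: "IP \<pi> pre xs zs os" and ne: "zs \<noteq> []" and m: "hd zs = Min (set xs \<union> set zs)"
  shows "IP \<pi> pre xs (tl zs) (os @ [hd zs])"
proof -
  have P: "set xs \<union> set zs = {length os + 1..length \<pi>}" using ip_pend[OF h] .
  have "hd zs \<in> {length os + 1..length \<pi>}" using P ne by auto
  then have "Min {length os + 1..length \<pi>} = length os + 1" by (intro Min_eqI) auto
  then have "Min (set xs \<union> set zs) = length os + 1" using P by simp
  then have hz: "hd zs = length os + 1" using m by simp
  have os: "os = [1..<length os + 1]" using h by (simp add: IP_def)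
  have O: "os @ [hd zs] = [1..<length (os @ [hd zs]) + 1]" using os hz
    by (metis length_append_singleton add_Suc_right upt_Suc_append le_add2 add.commute Suc_eq_plus1)
  obtain hh t where zt: "zs = hh # t" using ne by (cases zs) auto
  have A: "distinct (xs @ zs @ os)" "set (xs @ zs @ os) = {1..length \<pi>}" "\<pi> = pre @ xs"
    "sorted_wrt (<) zs" using h by (auto simp: IP_def)
  show ?thesis unfolding IP_def
  proof (intro conjI)
    show "\<pi> = pre @ xs" using A by simp
    show "distinct (xs @ tl zs @ os @ [hd zs])" using A(1) zt by auto
    show "set (xs @ tl zs @ os @ [hd zs]) = {1..length \<pi>}" using A(2) zt by auto
    show "os @ [hd zs] = [1..<length (os @ [hd zs]) + 1]" by (rule O)
    show "sorted_wrt (<) (tl zs)" using A(4) by (rule sw_tl)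
  qed
qed


lemma cross_ip:
  assumes h: "IP \<pi> pre (x # ys) zs os" and c: "zs = [] \<or> x < hd zs"
  shows "IP \<pi> (pre @ [x]) ys (x # zs) os"
proof -
  have A: "distinct (x # ys @ zs @ os)" "set (x # ys @ zs @ os) = {1..length \<pi>}" "\<pi> = pre @ x # ys"
    "sorted_wrt (<) zs" "os = [1..<length os + 1]" using h by (auto simp: IP_def)
  show ?thesis unfolding IP_def
  proof (intro conjI)
    show "\<pi> = (pre @ [x]) @ ys" using A by simp
    show "distinct (ys @ (x # zs) @ os)" using A(1) by auto
    show "set (ys @ (x # zs) @ os) = {1..length \<pi>}" using A(2) by auto
    show "os = [1..<length os + 1]" by (rule A(5))
    show "sorted_wrt (<) (x # zs)" using A(4) c by (rule push_lt)
  qed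
qed

lemma mk231:
  assumes p: "\<pi> = pre @ x # ys" and t: "t \<in> set pre" and y: "y \<in> set ys" and yt: "y < t" and tx: "t < x"
  shows "\<not> avoids_231 \<pi>"
proof -
  obtain i where i: "i < length pre" "pre ! i = t" using t by (auto simp: in_set_conv_nth)
  obtain l where l: "l < length ys" "ys ! l = y" using y by (auto simp: in_set_conv_nth)
  have "\<pi> ! i = t" using i p by (simp add: nth_append)
  moreover have "\<pi> ! length pre = x" using p by simp
  moreover have "\<pi> ! (length pre + Suc l) = y" using p l by (simp add: nth_append)
  moreover have "length pre + Suc l < length \<pi>" using p l by simp
  ultimately have "\<exists>i' j' l'. i' < j' \<and> j' < l' \<and> l' < length \<pi> \<and> \<pi>!l' < \<pi>!i' \<and> \<pi>!i' < \<pi>!j'"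
    using i l yt tx by (intro exI[of _ i] exI[of _ "length pre"] exI[of _ "length pre + Suc l"]) auto
  then show ?thesis by (simp add: avoids_231_def)
qed

lemma stuck_facts:
  assumes h: "IP \<pi> pre (x # ys) zs os" and p: "is_perm \<pi>" and ne: "zs \<noteq> []" and nl: "\<not> x < hd zs"
    and nm: "hd zs \<noteq> Min (set (x # ys) \<union> set zs)"
  shows "\<exists>y. y < hd zs \<and> hd zs < x \<and> y \<in> set ys \<and> hd zs \<in> set pre \<and> y \<in> {1..length \<pi>}
     \<and> y \<notin> set zs \<and> y \<notin> set os \<and> \<not> avoids_231 \<pi>"
proof -
  let ?t = "hd zs" and ?P = "set (x # ys) \<union> set zs"
  have A: "distinct (x # ys @ zs @ os)" "set (x # ys @ zs @ os) = {1..length \<pi>}" "\<pi> = pre @ x # ys"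
    "sorted_wrt (<) zs" using h by (auto simp: IP_def)
  have tz: "?t \<in> set zs" using ne by simp
  have tx: "?t < x" using nl tz A(1) by (cases "?t = x") auto
  have fin: "finite ?P" by simp
  have "Min ?P \<le> ?t" using tz fin by (intro Min_le) auto
  then have yt: "Min ?P < ?t" using nm by simp
  have yP: "Min ?P \<in> ?P" using fin by (intro Min_in) auto
  have ynz: "Min ?P \<notin> set zs" using sw_lt_hd[OF A(4)] yt by force
  have yys: "Min ?P \<in> set ys" using yP ynz yt tx by auto
  have tpre: "?t \<in> set pre"
  proof -
    have "?t \<in> set \<pi>" using A(2) p tz unfolding is_perm_def by auto
    moreover have "?t \<notin> set (x # ys)" using A(1) tz by auto
    ultimately show ?thesis using A(3) by auto
  qed
  have "Min ?P \<in> set (x # ys @ zs @ os)" using yys by simp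
  then have "Min ?P \<in> {1..length \<pi>}" using A(2) by blast
  moreover have "Min ?P \<notin> set os" using A(1) yys by auto
  moreover have "\<not> avoids_231 \<pi>" using mk231[OF A(3) tpre yys yt tx] .
  ultimately show ?thesis using yt tx yys tpre ynz by blast
qed

lemma cross_Q:
  assumes h: "IP \<pi> pre (x # ys) zs os" and p: "is_perm \<pi>" and q: "Qc \<pi> c"
    and ic: "istk c = zs" "outp c = os" and cr: "zs = [] \<or> x < hd zs"
    and ic': "istk c' = x # zs" "outp c' = os"
  shows "Qc \<pi> c'"
  unfolding Qc_def
proof (intro allI impI)
  fix i j l assume t: "i < j \<and> j < l \<and> l < length \<pi> \<and> \<pi> ! l < \<pi> ! i \<and> \<pi> ! i < \<pi> ! j"
  have old: "\<pi> ! j \<notin> set zs \<and> \<pi> ! j \<notin> set os" using q t ic unfolding Qc_def by blast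
  have A: "distinct (x # ys @ zs @ os)" "set (x # ys @ zs @ os) = {1..length \<pi>}" "\<pi> = pre @ x # ys"
    "sorted_wrt (<) zs" "os = [1..<length os + 1]" using h by (auto simp: IP_def)
  have dp: "distinct \<pi>" using p by (simp add: is_perm_def)
  have "\<pi> ! j \<noteq> x"
  proof
    assume jx: "\<pi> ! j = x"
    have lp: "length pre < length \<pi>" "\<pi> ! length pre = x" using A(3) by auto
    have jl: "j = length pre" using nth_eq_iff_index_eq[OF dp, of j "length pre"] jx lp t by auto
    have ai: "\<pi> ! i \<in> set pre" using t jl A(3) by (simp add: nth_append)
    have cl: "\<pi> ! l \<in> set ys"
    proof -
      have "\<pi> ! l = ys ! (l - length pre - 1)" using t jl A(3) by (simp add: nth_append)
      moreover have "l < length pre + 1 + length ys" using t A(3) by simp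
      then have "l - length pre - 1 < length ys" using jl t by linarith
      ultimately show ?thesis by simp
    qed
    have so: "set os = {1..length os}" using A(5) set_os by blast
    have "\<pi> ! l \<notin> set os" using A(1) cl by auto
    moreover have "\<pi> ! l \<ge> 1" using A(2) cl by auto
    ultimately have "\<pi> ! l > length os" using so by auto
    then have "\<pi> ! i \<notin> set os" using so t by auto
    then have "\<pi> ! i \<in> set zs" using ai ip_pre[OF h p] by auto
    then have "zs \<noteq> []" "hd zs \<le> \<pi> ! i" using sw_lt_hd[OF A(4)] by auto
    then show False using cr t jx by simp
  qed
  then show "\<pi> ! j \<notin> set (istk c') \<and> \<pi> ! j \<notin> set (outp c')" using old ic' by simp
qed

lemma finish_ip: "IP \<pi> pre [] [] os \<Longrightarrow> os = [1..<length \<pi> + 1]"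
proof -
  assume h: "IP \<pi> pre [] [] os"
  have s1: "set os = {1..length \<pi>}" using h by (auto simp: IP_def)
  have o: "os = [1..<length os + 1]" using h by (simp add: IP_def)
  have s2: "set os = {1..length os}" using set_os o by blast
  have "{1..length \<pi>} = {1..length os}" using s1 s2 by (rule subst)
  then have "card {1..length \<pi>} = card {1..length os}" by (rule arg_cong)
  then have "Suc (length \<pi>) - 1 = Suc (length os) - 1" by (simp only: card_atLeastAtMost)
  then have len: "length os = length \<pi>" by simp
  have "[1..<length os + 1] = [1..<length \<pi> + 1]" using len by simp
  then show ?thesis by (rule trans[OF o])
qed


definition Inv :: "nat list \<Rightarrow> nat \<Rightarrow> cfg \<Rightarrow> bool" where
  "Inv \<pi> k c = (\<exists>pre xs zs os. IP \<pi> pre xs zs os \<and>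
     (c = cfgN k xs zs os \<or> (\<exists>i x ys. i < k \<and> xs = x # ys \<and> c = cfgT k i x ys zs os)))"

definition mu :: "nat \<Rightarrow> cfg \<Rightarrow> nat" where
  "mu k c = (k+2) * length (inp c) + length (istk c) + (\<Sum>i<k. (k+1-i) * length (ds c ! i))"

lemma mu_N: "mu k (cfgN k xs zs os) = (k+2) * length xs + length zs"
  by (simp add: mu_def cfgN_def)

lemma mu_T: "i < k \<Longrightarrow> mu k (cfgT k i x ys zs os) = (k+2) * length ys + length zs + (k+1-i)"
proof -
  assume ik: "i < k"
  have "(\<Sum>i'<k. (k+1-i') * length ((replicate k [])[i := [x]] ! i')) = (\<Sum>i'<k. if i' = i then k+1-i else 0)"
    by (rule sum.cong) (auto simp: nthT ik)
  also have "\<dots> = k+1-i" using ik by simp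
  finally show ?thesis by (simp add: mu_def cfgT_def)
qed

lemma wf_T: "i < k \<Longrightarrow> sorted_wrt (<) zs \<Longrightarrow> WF k (cfgT k i x ys zs os)"
proof -
  assume ik: "i < k" and s: "sorted_wrt (<) zs"
  have "\<forall>s\<in>set ((replicate k [])[i := [x]]). sorted_wrt (>) s"
    by (rule all_upd) auto
  then show ?thesis using s by (simp add: WF_def cfgT_def)
qed

lemma step_main:
  assumes perm: "is_perm \<pi>" and inv: "Inv \<pi> k c" and q: "Qc \<pi> c"
  shows "(lg_step k c = None \<and> outp c = [1..<length \<pi> + 1]) \<or>
         (\<exists>c'. lg_step k c = Some c' \<and> Inv \<pi> k c' \<and> Qc \<pi> c' \<and> mu k c' < mu k c) \<or>
         (\<not> avoids_231 \<pi> \<and> WF k c \<and> (\<exists>a b cc. cc \<in> {1..length \<pi>} \<and> Bad k a b cc c))"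
proof -
  obtain pre xs zs os where ip: "IP \<pi> pre xs zs os" and sh:
    "c = cfgN k xs zs os \<or> (\<exists>i x ys. i < k \<and> xs = x # ys \<and> c = cfgT k i x ys zs os)"
    using inv unfolding Inv_def by blast
  have srt: "sorted_wrt (<) zs" using ip by (simp add: IP_def)
  have pend: "pending c = set xs \<union> set zs" using sh by (auto simp: pendingN pendingT)
  have io: "istk c = zs" "outp c = os" using sh by (auto simp: cfgN_def cfgT_def)
  show ?thesis
  proof (cases "popc c")
    case True
    have ne: "zs \<noteq> []" and m: "hd zs = Min (set xs \<union> set zs)" using True pend io by (auto simp: popc_def)
    have ip': "IP \<pi> pre xs (tl zs) (os @ [hd zs])" using pop_ip[OF ip ne m] .
    have st: "lg_step k c = Some (do_pop c)" using step_pop[OF True] .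
    have inv': "Inv \<pi> k (do_pop c)" using sh
    proof
      assume "c = cfgN k xs zs os"
      then have "do_pop c = cfgN k xs (tl zs) (os @ [hd zs])" by (simp add: popN)
      then show ?thesis using ip' unfolding Inv_def by blast
    next
      assume "\<exists>i x ys. i < k \<and> xs = x # ys \<and> c = cfgT k i x ys zs os"
      then obtain i x ys where "i < k" "xs = x # ys" "c = cfgT k i x ys zs os" by blast
      then have "do_pop c = cfgT k i x ys (tl zs) (os @ [hd zs])" "i < k" "xs = x # ys" by (simp_all add: popT)
      then show ?thesis using ip' unfolding Inv_def by blast
    qed
    have q': "Qc \<pi> (do_pop c)" unfolding Qc_def
    proof (intro allI impI)
      fix i j l assume t: "i < j \<and> j < l \<and> l < length \<pi> \<and> \<pi> ! l < \<pi> ! i \<and> \<pi> ! i < \<pi> ! j"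
      then have o: "\<pi> ! j \<notin> set zs \<and> \<pi> ! j \<notin> set os" using q io unfolding Qc_def by blast
      have "hd zs \<in> set zs" using ne by simp
      then show "\<pi> ! j \<notin> set (istk (do_pop c)) \<and> \<pi> ! j \<notin> set (outp (do_pop c))"
        using o io by (auto simp: do_pop_def notin_tl)
    qed
    have "mu k (do_pop c) < mu k c" using sh ne by (cases zs) (auto simp: popN popT mu_N mu_T)
    then show ?thesis using st inv' q' by blast
  next
    case np: False
    from sh show ?thesis
    proof
      assume cN: "c = cfgN k xs zs os"
      show ?thesis
      proof (cases xs)
        case Nil
        show ?thesis
        proof (cases zs)
          case Nil
          have "lg_step k c = None" using cN \<open>xs = []\<close> Nil step_N_empty by simp
          moreover have "outp c = [1..<length \<pi> + 1]" using io finish_ip ip \<open>xs = []\<close> Nil by simp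
          ultimately show ?thesis by blast
        next
          case (Cons z zs')
          have "popc c" using pend io \<open>xs = []\<close> hd_min[OF srt] Cons by (simp add: popc_def)
          then show ?thesis using np by simp
        qed
      next
        case (Cons x ys)
        show ?thesis
        proof (cases "k = 0")
          case kp: False
          have st: "lg_step k c = Some (cfgT k 0 x ys zs os)" using step_N_push[of k x ys zs os] kp np cN Cons by simp
          have "Inv \<pi> k (cfgT k 0 x ys zs os)" unfolding Inv_def using ip Cons kp by blast
          moreover have "Qc \<pi> (cfgT k 0 x ys zs os)" using q io by (simp add: Qc_def cfgT_def)
          moreover have "mu k (cfgT k 0 x ys zs os) < mu k c" using cN Cons kp by (simp add: mu_N mu_T)
          ultimately show ?thesis using st by blast
        next
          case k0: True
          show ?thesis
          proof (cases "zs = [] \<or> x < hd zs")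
            case True
            have st: "lg_step k c = Some (cfgN 0 ys (x # zs) os)" using step_N0_push[of x ys zs os] True np cN Cons k0 by simp
            have ip2: "IP \<pi> pre (x # ys) zs os" using ip Cons by simp
            have "Inv \<pi> k (cfgN 0 ys (x # zs) os)" unfolding Inv_def using cross_ip[OF ip2 True] k0 by blast
            moreover have "Qc \<pi> (cfgN 0 ys (x # zs) os)"
              by (rule cross_Q[OF ip2 perm q io True]) (simp_all add: cfgN_def)
            moreover have "mu k (cfgN 0 ys (x # zs) os) < mu k c" using cN Cons k0 by (simp add: mu_N)
            ultimately show ?thesis using st k0 by blast
          next
            case False
            have ip2: "IP \<pi> pre (x # ys) zs os" using ip Cons by simp
            have ne: "zs \<noteq> []" and nl: "\<not> x < hd zs" using False by auto
            have nm: "hd zs \<noteq> Min (set (x # ys) \<union> set zs)" using np pend io ne Cons by (simp add: popc_def)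
            obtain y where y: "y < hd zs" "hd zs < x" "y \<in> set ys" "y \<in> {1..length \<pi>}"
              "y \<notin> set zs" "y \<notin> set os" "\<not> avoids_231 \<pi>"
              using stuck_facts[OF ip2 perm ne nl nm] by blast
            have "WF k c" using cN k0 srt by (simp add: WF_def cfgN_def)
            moreover have "Bad k (hd zs) x y c" using y cN k0 Cons ne
              by (simp add: Bad_def B2_def cfgN_def)
            ultimately show ?thesis using y by blast
          qed
        qed
      qed
    next
      assume "\<exists>i x ys. i < k \<and> xs = x # ys \<and> c = cfgT k i x ys zs os"
      then obtain i x ys where ik: "i < k" and xs: "xs = x # ys" and cT: "c = cfgT k i x ys zs os" by blast
      have ip2: "IP \<pi> pre (x # ys) zs os" using ip xs by simp
      show ?thesis
      proof (cases "i + 1 < k")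
        case True
        have st: "lg_step k c = Some (cfgT k (i+1) x ys zs os)" using step_T_move[OF True] np cT by simp
        have "Inv \<pi> k (cfgT k (i+1) x ys zs os)" unfolding Inv_def using ip xs True by blast
        moreover have "Qc \<pi> (cfgT k (i+1) x ys zs os)" using q io by (simp add: Qc_def cfgT_def)
        moreover have "mu k (cfgT k (i+1) x ys zs os) < mu k c" using cT True ik by (simp add: mu_T)
        ultimately show ?thesis using st by blast
      next
        case False
        then have i: "i = k - 1" and kp: "0 < k" using ik by auto
        show ?thesis
        proof (cases "zs = [] \<or> x < hd zs")
          case True
          have st: "lg_step k c = Some (cfgN k ys (x # zs) os)" using step_T_cross[OF kp _ True] np cT i by simp
          have "Inv \<pi> k (cfgN k ys (x # zs) os)" unfolding Inv_def using cross_ip[OF ip2 True] by blast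
          moreover have "Qc \<pi> (cfgN k ys (x # zs) os)"
            by (rule cross_Q[OF ip2 perm q io True]) (simp_all add: cfgN_def)
          moreover have "mu k (cfgN k ys (x # zs) os) < mu k c" using cT ik i by (simp add: mu_N mu_T)
          ultimately show ?thesis using st by blast
        next
          case False
          have ne: "zs \<noteq> []" and nl: "\<not> x < hd zs" using False by auto
          have nm: "hd zs \<noteq> Min (set (x # ys) \<union> set zs)" using np pend io ne xs by (simp add: popc_def)
          obtain y where y: "y < hd zs" "hd zs < x" "y \<in> set ys" "y \<in> {1..length \<pi>}"
            "y \<notin> set zs" "y \<notin> set os" "\<not> avoids_231 \<pi>"
            using stuck_facts[OF ip2 perm ne nl nm] by blast
          have "WF k c" using cT wf_T[OF ik srt] by simp
          moreover have "Bad k (hd zs) x y c" using y cT i kp ne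
            by (simp add: Bad_def B2_def cfgT_def nthT)
          ultimately show ?thesis using y by blast
        qed
      qed
    qed
  qed
qed


lemma Qc_avoid: "avoids_231 \<pi> \<Longrightarrow> Qc \<pi> c"
  unfolding avoids_231_def Qc_def by blast

lemma avoid_dir:
  assumes av: "avoids_231 \<pi>" and perm: "is_perm \<pi>"
  shows "Inv \<pi> k c \<Longrightarrow> \<exists>f. lg_step k (lg_run k f c) = None \<and> outp (lg_run k f c) = [1..<length \<pi> + 1]"
proof (induction "mu k c" arbitrary: c rule: less_induct)
  case less
  from step_main[OF perm less.prems Qc_avoid[OF av]] av show ?case
  proof (elim disjE conjE exE)
    assume "lg_step k c = None" "outp c = [1..<length \<pi> + 1]"
    then show ?thesis by (intro exI[of _ 0]) simp
  next
    fix c' assume st: "lg_step k c = Some c'" and i: "Inv \<pi> k c'" and m: "mu k c' < mu k c"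
    obtain f where "lg_step k (lg_run k f c') = None \<and> outp (lg_run k f c') = [1..<length \<pi> + 1]"
      using less.hyps[OF m i] by blast
    then show ?thesis using run_Some[OF st, of f] by (intro exI[of _ "Suc f"]) simp
  qed simp
qed

lemma bad_dir:
  assumes perm: "is_perm \<pi>"
  shows "Inv \<pi> k c \<Longrightarrow> Qc \<pi> c \<Longrightarrow> (Inv \<pi> k (lg_run k f c) \<and> Qc \<pi> (lg_run k f c)) \<or>
     (\<exists>a b cc. cc \<in> {1..length \<pi>} \<and> Bad k a b cc (lg_run k f c))"
proof (induction f arbitrary: c)
  case 0 then show ?case by simp
next
  case (Suc f)
  from step_main[OF perm Suc.prems] show ?case
  proof (elim disjE conjE exE)
    assume "lg_step k c = None"
    then show ?thesis using Suc.prems by simp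
  next
    fix c' assume st: "lg_step k c = Some c'" and i: "Inv \<pi> k c'" and q: "Qc \<pi> c'"
    then show ?thesis using Suc.IH[OF i q] run_Some[OF st, of f] by simp
  next
    fix a b cc assume w: "WF k c" and cc: "cc \<in> {1..length \<pi>}" and b: "Bad k a b cc c"
    then show ?thesis using bad_run[OF w b, of "Suc f"] by blast
  qed
qed

lemma init_N: "init_cfg k \<pi> = cfgN k \<pi> [] []"
  by (simp add: init_cfg_def cfgN_def)

lemma init_inv: "is_perm \<pi> \<Longrightarrow> Inv \<pi> k (init_cfg k \<pi>)"
  unfolding Inv_def init_N IP_def is_perm_def
  by (intro exI[of _ "[]"] exI[of _ \<pi>] exI[of _ "[]"] exI[of _ "[]"]) simp

lemma init_Q: "Qc \<pi> (init_cfg k \<pi>)"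
  by (simp add: Qc_def init_cfg_def)

theorem mainTheorem12:
  fixes k :: nat and \<pi> :: "nat list"
  assumes "is_perm \<pi>"
  shows "lg_sortable k \<pi> \<longleftrightarrow> avoids_231 \<pi>"
proof
  assume "lg_sortable k \<pi>"
  then obtain f where e: "outp (lg_run k f (init_cfg k \<pi>)) = [1..<length \<pi> + 1]"
    unfolding lg_sortable_def by blast
  show "avoids_231 \<pi>"
  proof (rule ccontr)
    assume na: "\<not> avoids_231 \<pi>"
    have D: "(Inv \<pi> k (lg_run k f (init_cfg k \<pi>)) \<and> Qc \<pi> (lg_run k f (init_cfg k \<pi>))) \<or>
      (\<exists>a b cc. cc \<in> {1..length \<pi>} \<and> Bad k a b cc (lg_run k f (init_cfg k \<pi>)))"
      by (rule bad_dir[OF assms init_inv[OF assms] init_Q])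
    from D show False
    proof (elim disjE conjE exE)
      assume q: "Qc \<pi> (lg_run k f (init_cfg k \<pi>))"
      obtain i j l where t: "i < j" "j < l" "l < length \<pi>" "\<pi> ! l < \<pi> ! i" "\<pi> ! i < \<pi> ! j"
        using na unfolding avoids_231_def by blast
      have "\<pi> ! j \<in> set \<pi>" using t by simp
      then have "\<pi> ! j \<in> {1..length \<pi>}" using assms by (simp add: is_perm_def)
      then have "\<pi> ! j \<in> set (outp (lg_run k f (init_cfg k \<pi>)))" using e by (simp del: upt_Suc)
      then show False using q t unfolding Qc_def by blast
    next
      fix a b cc assume "cc \<in> {1..length \<pi>}" "Bad k a b cc (lg_run k f (init_cfg k \<pi>))"
      then show False using bad_final e by blast
    qed
  qed
next
  assume "avoids_231 \<pi>"
  then show "lg_sortable k \<pi>" using avoid_dir[OF _ assms init_inv[OF assms]]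
    unfolding lg_sortable_def by blast
qed

end
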